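(* For real $p>0$, $$J_p^2:=\int_0^1 \frac{\ln^2(-\ln x)}{1+x^p}\,dx=\frac{1}{2p}\Big[\gamma^2+\frac{\pi^2}{6}+2\gamma \ln (2p)+\ln^2 (2p)\Big]\left[\psi\!\left(\tfrac{p+1}{2p}\right)-\psi\!\left(\tfrac{1}{2p}\right)\right]+\frac{\gamma+\ln (2p)}{p}\left[\gamma_1\!\left(\tfrac{1}{2p}\right)-\gamma_1\!\left(\tfrac{p+1}{2p}\right)\right]+\frac{1}{2p}\left[\gamma_2\!\left(\tfrac{1}{2p}\right)-\gamma_2\!\left(\tfrac{p+1}{2p}\right)\right],$$ and $\lim_{p\to\infty}J_p^2=\gamma^2+\zeta(2)$.
   Context: The Stieltjes constants $\gamma_k(a)$ are defined by the Laurent expansion of the Hurwitz zeta function $\zeta(s,a)=\frac{1}{s-1}+\sum_{n=0}^\infty \frac{(-1)^n}{n!}\gamma_n(a)(s-1)^n$ about $s=1$; $\gamma$ is Euler's constant, $\psi=\Gamma'/\Gamma$, and $\zeta$ is the Riemann zeta function. *)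

theory Defs
  imports "HOL-Analysis.Analysis"
begin

definition hurwitz_zeta :: "real \<Rightarrow> real \<Rightarrow> real" where
  "hurwitz_zeta s a = (\<Sum>k. (real k + a) powr (- s))"

text \<open>Stieltjes constants via the Laurent expansion at s = 1:
  zeta(s,a) - 1/(s-1) extends analytically to s = 1 and its n-th derivative there equals
  (-1)^n gamma_n(a).  We take the one-sided limit s -> 1+ of the n-th derivative of the
  regular part, computed on the half-line s > 1.\<close>
definition stieltjes :: "nat \<Rightarrow> real \<Rightarrow> real" where
  "stieltjes n a = (-1) ^ n *
     Lim (at_right 1) ((deriv ^^ n) (\<lambda>s. hurwitz_zeta s a - 1 / (s - 1)))"

definition J2 :: "real \<Rightarrow> real" where
  "J2 p = integral {0<..<1} (\<lambda>x. (ln (- ln x))\<^sup>2 / (1 + x powr p))"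

end

theory Submission
  imports Defs
begin


definition hh :: "real \<Rightarrow> nat \<Rightarrow> nat \<Rightarrow> real \<Rightarrow> real" where
 "hh a j k s = ln (real k + a) ^ j * (real k + a) powr (-s)
     - integral {real k + 1..real k + 2} (\<lambda>x. ln x ^ j * x powr (-s))"

lemma integ_deriv:
  fixes j k :: nat and s :: real
  shows "((\<lambda>s. integral {real k + 1..real k + 2} (\<lambda>x. ln x ^ j * x powr (-s))) has_real_derivative
           - integral {real k + 1..real k + 2} (\<lambda>x. ln x ^ Suc j * x powr (-s))) (at s)"
proof -
  have "((\<lambda>s. integral (cbox (real k + 1) (real k + 2)) (\<lambda>x. ln x ^ j * x powr (-s))) has_real_derivative
           integral (cbox (real k + 1) (real k + 2)) (\<lambda>x. - (ln x ^ Suc j * x powr (-s)))) (at s within UNIV)"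
  proof (rule leibniz_rule_field_derivative)
    fix s x :: real assume "x \<in> cbox (real k + 1) (real k + 2)"
    then have x: "x > 0" by auto
    show "((\<lambda>s. ln x ^ j * x powr (-s)) has_real_derivative - (ln x ^ Suc j * x powr (-s))) (at s within UNIV)"
      using x by (auto intro!: derivative_eq_intros simp: powr_def)
  next
    fix s :: real
    show "(\<lambda>x. ln x ^ j * x powr (-s)) integrable_on cbox (real k + 1) (real k + 2)"
      by (rule integrable_continuous) (auto intro!: continuous_intros)
  next
    show "continuous_on (UNIV \<times> cbox (real k + 1) (real k + 2)) (\<lambda>(s, x). - (ln x ^ Suc j * x powr (-s)))"
      by (auto intro!: continuous_intros simp: split_beta)
  qed auto
  then show ?thesis by (simp add: integral_neg)
qed

lemma hh_deriv:
  assumes "a > 0"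
  shows "((\<lambda>s. hh a j k s) has_real_derivative - hh a (Suc j) k s) (at s)"
proof -
  have p: "real k + a > 0" using assms by simp
  have "((\<lambda>s. ln (real k + a) ^ j * (real k + a) powr (-s)) has_real_derivative
      - (ln (real k + a) ^ Suc j * (real k + a) powr (-s))) (at s)"
    using p by (auto intro!: derivative_eq_intros simp: powr_def)
  from DERIV_diff[OF this integ_deriv[of k j s]] show ?thesis
    unfolding hh_def by simp
qed

lemma lip_bound:
  fixes \<phi> \<phi>' :: "real \<Rightarrow> real"
  assumes "u \<le> v" "\<And>y. u \<le> y \<Longrightarrow> y \<le> v \<Longrightarrow> (\<phi> has_real_derivative \<phi>' y) (at y)"
    "\<And>y. u \<le> y \<Longrightarrow> y \<le> v \<Longrightarrow> \<bar>\<phi>' y\<bar> \<le> B"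
  shows "\<bar>\<phi> v - \<phi> u\<bar> \<le> B * (v - u)"
proof (cases "u = v")
  case True then show ?thesis by simp
next
  case False
  then have "u < v" using assms(1) by simp
  from MVT2[OF this assms(2)] obtain z where z: "u < z" "z < v" "\<phi> v - \<phi> u = (v - u) * \<phi>' z"
    by auto
  have "\<bar>\<phi>' z\<bar> \<le> B" using assms(3)[of z] z by simp
  then have "\<bar>(v - u) * \<phi>' z\<bar> \<le> (v - u) * B" using \<open>u < v\<close>
    by (simp add: abs_mult mult_left_mono)
  then show ?thesis using z by (simp add: mult.commute)
qed

lemma lnpow_le:
  assumes "1 \<le> (y::real)" "i \<le> (2::nat)"
  shows "ln y ^ i \<le> 64 * y powr (1/4)"
proof -
  have l0: "0 \<le> ln y" using assms(1) by (rule ln_ge_zero)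
  have l1: "ln y \<le> 8 * y powr (1/8)" using ln_powr_bound[OF assms(1), of "1/8"] by simp
  have q: "y powr (1/8) * y powr (1/8) = y powr (1/4)" by (simp flip: powr_add)
  have q1: "1 \<le> y powr (1/8)" by (rule ge_one_powr_ge_zero) (use assms in auto)
  have q2: "y powr (1/8) \<le> y powr (1/4)" using assms by (intro powr_mono) auto
  have "i = 0 \<or> i = 1 \<or> i = 2" using assms by auto
  then show ?thesis
  proof (elim disjE)
    assume "i = 0" then show ?thesis using q1 q2 by simp
  next
    assume "i = 1" then show ?thesis using l1 q1 q2 by simp
  next
    assume "i = 2"
    have "ln y * ln y \<le> (8 * y powr (1/8)) * (8 * y powr (1/8))"
      using l0 l1 by (intro mult_mono) auto
    then show ?thesis using \<open>i = 2\<close> q by (simp add: power2_eq_square)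
  qed
qed

lemma phi_deriv:
  assumes "(y::real) > 0"
  shows "((\<lambda>y. ln y ^ j * y powr (-s)) has_real_derivative
          (real j * ln y ^ (j - 1) - s * ln y ^ j) * y powr (-s - 1)) (at y)"
proof -
  have e: "y powr (-s - 1) = y powr (-s) / y" using assms by (simp add: powr_diff)
  show ?thesis using assms
    by (auto intro!: derivative_eq_intros simp: e field_simps)
qed

lemma phi_bound:
  assumes "1 \<le> (y::real)" "1/2 \<le> s" "s \<le> 2" "j \<le> (2::nat)"
  shows "\<bar>(real j * ln y ^ (j - 1) - s * ln y ^ j) * y powr (-s - 1)\<bar> \<le> 256 * y powr (-5/4)"
proof -
  have l0: "0 \<le> ln y" using assms(1) by (rule ln_ge_zero)
  have a1: "ln y ^ (j - 1) \<le> 64 * y powr (1/4)" using lnpow_le[OF assms(1), of "j - 1"] assms by simp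
  have a2: "ln y ^ j \<le> 64 * y powr (1/4)" using lnpow_le[OF assms(1), of j] assms by simp
  have p1: "0 \<le> ln y ^ (j - 1)" "0 \<le> ln y ^ j" using l0 by simp_all
  have "\<bar>real j * ln y ^ (j - 1) - s * ln y ^ j\<bar> \<le> real j * ln y ^ (j - 1) + s * ln y ^ j"
    using p1 assms by (intro abs_leI) (auto intro!: add_nonneg_nonneg mult_nonneg_nonneg)
  also have "\<dots> \<le> 2 * (64 * y powr (1/4)) + 2 * (64 * y powr (1/4))"
    using assms a1 a2 p1 by (intro add_mono mult_mono) auto
  finally have A: "\<bar>real j * ln y ^ (j - 1) - s * ln y ^ j\<bar> \<le> 256 * y powr (1/4)" by simp
  have B: "y powr (-s - 1) \<le> y powr (-3/2)" using assms by (intro powr_mono) auto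
  have "\<bar>(real j * ln y ^ (j - 1) - s * ln y ^ j) * y powr (-s - 1)\<bar>
        = \<bar>real j * ln y ^ (j - 1) - s * ln y ^ j\<bar> * y powr (-s - 1)" by (simp add: abs_mult)
  also have "\<dots> \<le> (256 * y powr (1/4)) * y powr (-3/2)"
    using A B by (intro mult_mono) auto
  also have "\<dots> = 256 * y powr (-5/4)" by (simp add: mult.assoc flip: powr_add)
  finally show ?thesis .
qed

lemma phi_diff_bound:
  assumes "1 \<le> (k::real)" "k \<le> u" "k \<le> v" "1/2 \<le> s" "s \<le> 2" "j \<le> (2::nat)"
  shows "\<bar>ln u ^ j * u powr (-s) - ln v ^ j * v powr (-s)\<bar> \<le> 256 * k powr (-5/4) * \<bar>u - v\<bar>"
proof -
  let ?\<phi> = "\<lambda>y. ln y ^ j * y powr (-s)"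
  let ?\<phi>' = "\<lambda>y. (real j * ln y ^ (j - 1) - s * ln y ^ j) * y powr (-s - 1)"
  have gen: "\<bar>?\<phi> w - ?\<phi> z\<bar> \<le> 256 * k powr (-5/4) * (w - z)" if "k \<le> z" "z \<le> w" for z w
  proof (rule lip_bound)
    fix y assume y: "z \<le> y" "y \<le> w"
    show "(?\<phi> has_real_derivative ?\<phi>' y) (at y)" using y that assms by (intro phi_deriv) auto
    have "\<bar>?\<phi>' y\<bar> \<le> 256 * y powr (-5/4)" using y that assms by (intro phi_bound) auto
    also have "\<dots> \<le> 256 * k powr (-5/4)" using y that assms by (auto intro!: powr_mono2')
    finally show "\<bar>?\<phi>' y\<bar> \<le> 256 * k powr (-5/4)" .
  qed (use that in auto)
  show ?thesis
  proof (cases "u \<le> v")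
    case True
    from gen[of u v] True assms show ?thesis by (simp add: abs_minus_commute)
  next
    case False
    from gen[of v u] False assms show ?thesis by simp
  qed
qed

lemma hh_as_integral:
  assumes "a > 0"
  shows "hh a j k s = integral {real k + 1..real k + 2}
     (\<lambda>x. ln (real k + a) ^ j * (real k + a) powr (-s) - ln x ^ j * x powr (-s))"
proof -
  have "(\<lambda>x. ln x ^ j * x powr (-s)) integrable_on {real k + 1..real k + 2}"
    by (rule integrable_continuous_interval) (auto intro!: continuous_intros)
  then show ?thesis unfolding hh_def
    by (subst integral_diff) auto
qed

lemma hh_bound:
  assumes "a > 0" "1 \<le> k" "1/2 \<le> s" "s \<le> 2" "j \<le> (2::nat)"
  shows "\<bar>hh a j k s\<bar> \<le> 256 * (a + 2) * real k powr (-5/4)"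
proof -
  let ?f = "\<lambda>x. ln (real k + a) ^ j * (real k + a) powr (-s) - ln x ^ j * x powr (-s)"
  have int: "?f integrable_on cbox (real k + 1) (real k + 2)"
    by (rule integrable_continuous) (auto intro!: continuous_intros)
  have bnd: "norm (?f x) \<le> 256 * (a + 2) * real k powr (-5/4)" if "x \<in> cbox (real k + 1) (real k + 2)" for x
  proof -
    have "norm (?f x) \<le> 256 * real k powr (-5/4) * \<bar>(real k + a) - x\<bar>"
      unfolding real_norm_def using that assms by (intro phi_diff_bound) auto
    also have "\<dots> \<le> 256 * real k powr (-5/4) * (a + 2)"
      using that assms by (intro mult_left_mono) auto
    finally show ?thesis by (simp add: algebra_simps)
  qed
  have "norm (integral (cbox (real k + 1) (real k + 2)) ?f) \<le> 256 * (a + 2) * real k powr (-5/4) * Henstock_Kurzweil_Integration.content (cbox (real k + 1) (real k + 2))"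
    by (rule has_integral_bound[OF _ integrable_integral[OF int] bnd]) (use assms in auto)
  then show ?thesis using assms by (simp add: hh_as_integral)
qed

definition GG :: "real \<Rightarrow> nat \<Rightarrow> real \<Rightarrow> real" where
  "GG a j s = (\<Sum>k. hh a j k s)"

lemma summable_M: "summable (\<lambda>n. 256 * (a + 2) * real n powr (-5/4))"
proof -
  have "summable (\<lambda>n. real n powr (-5/4))" by (subst summable_real_powr_iff) simp
  then show ?thesis by (intro summable_mult)
qed

lemma hh_ev_bound:
  assumes "a > 0" "j \<le> 2"
  shows "eventually (\<lambda>n. \<forall>s\<in>{1/2..2}. norm (hh a j n s) \<le> 256 * (a + 2) * real n powr (-5/4)) sequentially"
  using eventually_ge_at_top[of "1::nat"]
proof eventually_elim
  case (elim n)
  show ?case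
  proof
    fix s :: real assume "s \<in> {1/2..2}"
    then show "norm (hh a j n s) \<le> 256 * (a + 2) * real n powr (-5/4)"
      unfolding real_norm_def using elim assms by (intro hh_bound) auto
  qed
qed

lemma hh_ev_bound':
  assumes "a > 0" "j \<le> 2"
  shows "eventually (\<lambda>n. \<forall>s\<in>{1/2..2}. norm (- hh a j n s) \<le> 256 * (a + 2) * real n powr (-5/4)) sequentially"
  using hh_ev_bound[OF assms] by simp

lemma hh_summable:
  assumes "a > 0" "j \<le> 2" "s \<in> {1/2..2}"
  shows "summable (\<lambda>n. hh a j n s)"
proof (rule summable_comparison_test_ev[OF _ summable_M])
  show "\<forall>\<^sub>F n in sequentially. norm (hh a j n s) \<le> 256 * (a + 2) * real n powr (-5/4)"
    using hh_ev_bound[OF assms(1,2)] assms(3) by (auto elim: eventually_mono)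
qed

lemma hh_uniform:
  assumes "a > 0" "j \<le> 2"
  shows "uniform_limit {1/2..2} (\<lambda>n s. \<Sum>i<n. hh a j i s) (GG a j) sequentially"
  unfolding GG_def[abs_def]
  by (rule Weierstrass_m_test_ev[OF hh_ev_bound[OF assms] summable_M])

lemma GG_cont:
  assumes "a > 0" "j \<le> 2"
  shows "continuous_on {1/2..2} (GG a j)"
proof (rule uniform_limit_theorem[OF _ hh_uniform[OF assms]])
  have "continuous_on {1/2..2} (\<lambda>s. hh a j i s)" for i
    by (rule DERIV_continuous_on) (rule has_field_derivative_at_within[OF hh_deriv[OF assms(1)]])
  then show "\<forall>\<^sub>F n in sequentially. continuous_on {1/2..2} (\<lambda>s. \<Sum>i<n. hh a j i s)"
    by (intro always_eventually allI continuous_on_sum) auto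
qed simp

lemma GG_deriv:
  assumes "a > 0" "j \<le> 1" "s \<in> {1/2<..<2}"
  shows "(GG a j has_real_derivative - GG a (Suc j) s) (at s)"
proof -
  have "((\<lambda>x. \<Sum>n. hh a j n x) has_field_derivative (\<Sum>n. - hh a (Suc j) n s)) (at s)"
  proof (rule has_field_derivative_series'(2)[of "{1/2..2}" _ _ 1])
    show "uniformly_convergent_on {1/2..2} (\<lambda>n x. \<Sum>i<n. - hh a (Suc j) i x)"
      by (rule Weierstrass_m_test'_ev[OF hh_ev_bound'[OF assms(1)] summable_M]) (use assms in simp)
    show "summable (\<lambda>n. hh a j n 1)" using assms by (intro hh_summable) auto
  qed (use assms in \<open>auto intro!: has_field_derivative_at_within[OF hh_deriv]\<close>)
  moreover have "(\<Sum>n. - hh a (Suc j) n s) = - GG a (Suc j) s"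
    unfolding GG_def using assms by (intro suminf_minus hh_summable) auto
  ultimately show ?thesis unfolding GG_def[abs_def] by simp
qed

lemma hh0_integral:
  assumes "s > 1"
  shows "integral {real k + 1..real k + 2} (\<lambda>x. ln x ^ 0 * x powr (-s))
     = (real k + 1) powr (1 - s) / (s - 1) - (real (Suc k) + 1) powr (1 - s) / (s - 1)"
proof -
  have "((\<lambda>x. x powr (-s)) has_integral
        ((real k + 2) powr (1 - s) / (1 - s) - (real k + 1) powr (1 - s) / (1 - s))) {real k + 1..real k + 2}"
  proof (rule fundamental_theorem_of_calculus)
    fix x assume x: "x \<in> {real k + 1..real k + 2}"
    then have "x > 0" by auto
    from DERIV_cdivide[OF has_real_derivative_powr[OF this, of "1 - s"], of "1 - s"]
    have "((\<lambda>x. x powr (1 - s) / (1 - s)) has_real_derivative x powr (-s)) (at x)"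
      using assms by simp
    then show "((\<lambda>x. x powr (1 - s) / (1 - s)) has_vector_derivative x powr (-s)) (at x within {real k + 1..real k + 2})"
      unfolding has_real_derivative_iff_has_vector_derivative[symmetric]
      by (rule has_field_derivative_at_within)
  qed simp
  then show ?thesis using assms by (simp add: integral_unique field_simps)
qed

lemma hurwitz_sums:
  assumes "a > 0" "s > 1"
  shows "(\<lambda>k. hh a 0 k s) sums (hurwitz_zeta s a - 1 / (s - 1))"
proof -
  have sm: "summable (\<lambda>n. real n powr (-s))" using assms by (subst summable_real_powr_iff) simp
  have "summable (\<lambda>k. (real k + a) powr (-s))"
  proof (rule summable_comparison_test_ev[OF _ sm])
    show "\<forall>\<^sub>F n in sequentially. norm ((real n + a) powr (-s)) \<le> real n powr (-s)"
      using eventually_ge_at_top[of "1::nat"]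
      by eventually_elim (use assms in \<open>auto intro!: powr_mono2'\<close>)
  qed
  then have A: "(\<lambda>k. (real k + a) powr (-s)) sums hurwitz_zeta s a"
    unfolding hurwitz_zeta_def by (rule summable_sums)
  let ?T = "\<lambda>k. (real k + 1) powr (1 - s) / (s - 1)"
  have fl: "filterlim (\<lambda>k. real k + 1) at_top sequentially"
    by (rule filterlim_at_top_mono[OF filterlim_real_sequentially]) auto
  have "?T \<longlonglongrightarrow> 0 / (s - 1)"
    using assms by (intro tendsto_divide tendsto_neg_powr fl) auto
  then have B: "(\<lambda>k. ?T k - ?T (Suc k)) sums (?T 0 - 0 / (s - 1))"
    by (rule telescope_sums')
  have "(\<lambda>k. (real k + a) powr (-s) - (?T k - ?T (Suc k))) sums (hurwitz_zeta s a - (?T 0 - 0 / (s - 1)))"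
    by (rule sums_diff[OF A B])
  moreover have "(\<lambda>k. hh a 0 k s) = (\<lambda>k. (real k + a) powr (-s) - (?T k - ?T (Suc k)))"
  proof
    fix k
    show "hh a 0 k s = (real k + a) powr (-s) - (?T k - ?T (Suc k))"
      unfolding hh_def hh0_integral[OF assms(2)] by (simp only: power_0 mult_1)
  qed
  moreover have "hurwitz_zeta s a - (?T 0 - 0 / (s - 1)) = hurwitz_zeta s a - 1 / (s - 1)" by simp
  ultimately show ?thesis by (simp only:)
qed

definition RR :: "real \<Rightarrow> real \<Rightarrow> real" where
  "RR a = (\<lambda>s. hurwitz_zeta s a - 1 / (s - 1))"

lemma RR_eq: "a > 0 \<Longrightarrow> s \<in> {1<..<2} \<Longrightarrow> RR a s = GG a 0 s"
  unfolding RR_def GG_def using hurwitz_sums[of a s] by (simp add: sums_iff)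

lemma deriv_RR: 
  assumes "a > 0" "s \<in> {1<..<2}"
  shows "deriv (RR a) s = - GG a 1 s"
proof -
  have "(GG a 0 has_real_derivative - GG a 1 s) (at s)" using assms GG_deriv[of a 0 s] by simp
  then have "(RR a has_real_derivative - GG a 1 s) (at s)"
  proof (rule has_field_derivative_transform_within_open[of _ _ _ "{1<..<2}"])
    fix x :: real assume "x \<in> {1<..<2}"
    then show "GG a 0 x = RR a x" using RR_eq[OF assms(1)] by simp
  qed (use assms in simp_all)
  then show ?thesis by (rule DERIV_imp_deriv)
qed

lemma deriv2_RR: 
  assumes "a > 0" "s \<in> {1<..<2}"
  shows "(deriv ^^ 2) (RR a) s = GG a 2 s"
proof -
  have "(GG a 1 has_real_derivative - GG a 2 s) (at s)"
    using assms GG_deriv[of a 1 s] by (simp add: numeral_2_eq_2)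
  then have "((\<lambda>s. - GG a 1 s) has_real_derivative GG a 2 s) (at s)"
    using DERIV_minus by fastforce
  then have "(deriv (RR a) has_real_derivative GG a 2 s) (at s)"
  proof (rule has_field_derivative_transform_within_open[of _ _ _ "{1<..<2}"])
    fix x :: real assume "x \<in> {1<..<2}"
    then show "- GG a 1 x = deriv (RR a) x" using deriv_RR[OF assms(1)] by simp
  qed (use assms in simp_all)
  then show ?thesis by (simp add: numeral_2_eq_2 DERIV_imp_deriv)
qed

lemma Lim_at_right_1:
  fixes f g :: "real \<Rightarrow> real"
  assumes "\<And>s. s \<in> {1<..<2} \<Longrightarrow> f s = g s" "continuous_on {1/2..2} g"
  shows "Lim (at_right 1) f = g 1"
proof (rule tendsto_Lim)
  have "continuous (at 1) g"
    by (rule continuous_on_interior[OF assms(2)]) simp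
  then have "(g \<longlongrightarrow> g 1) (at 1)" by (simp add: isCont_def)
  then have "(g \<longlongrightarrow> g 1) (at_right 1)" by (rule tendsto_within_subset) simp
  moreover have "eventually (\<lambda>s. g s = f s) (at_right 1)"
  proof -
    have "eventually (\<lambda>s. s \<in> {1<..<2}) (at_right (1::real))"
      by (rule eventually_at_right_real) simp
    then show ?thesis
      by eventually_elim (use assms in auto)
  qed
  ultimately show "(f \<longlongrightarrow> g 1) (at_right 1)" by (rule Lim_transform_eventually)
qed simp

lemma stieltjes1: "a > 0 \<Longrightarrow> stieltjes 1 a = GG a 1 1"
proof -
  assume a: "a > 0"
  have "Lim (at_right 1) (deriv (RR a)) = (\<lambda>s. - GG a 1 s) 1"
    by (rule Lim_at_right_1) (use a deriv_RR in \<open>auto intro!: continuous_intros GG_cont\<close>)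
  then show ?thesis unfolding stieltjes_def RR_def[symmetric] by simp
qed

lemma stieltjes2: "a > 0 \<Longrightarrow> stieltjes 2 a = GG a 2 1"
proof -
  assume a: "a > 0"
  have "Lim (at_right 1) ((deriv ^^ 2) (RR a)) = GG a 2 1"
    by (rule Lim_at_right_1) (use a deriv2_RR in \<open>auto intro!: GG_cont\<close>)
  then show ?thesis unfolding stieltjes_def RR_def[symmetric] by simp
qed

lemma hh_at1:
  assumes "a > 0"
  shows "hh a n k 1 = ln (real k + a) ^ n / (real k + a)
     - (ln (real (Suc k) + 1) ^ Suc n / real (Suc n) - ln (real k + 1) ^ Suc n / real (Suc n))"
proof -
  have "((\<lambda>x. ln x ^ n * x powr (-1)) has_integral
        (ln (real k + 2) ^ Suc n / real (Suc n) - ln (real k + 1) ^ Suc n / real (Suc n))) {real k + 1..real k + 2}"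
  proof (rule fundamental_theorem_of_calculus)
    fix x assume x: "x \<in> {real k + 1..real k + 2}"
    then have xp: "x > 0" by auto
    have "((\<lambda>x. ln x ^ Suc n) has_real_derivative of_nat (Suc n) * (inverse x * ln x ^ (Suc n - Suc 0))) (at x)"
      by (rule DERIV_power[OF DERIV_ln[OF xp]])
    from DERIV_cdivide[OF this, of "real (Suc n)"]
    have "((\<lambda>x. ln x ^ Suc n / real (Suc n)) has_real_derivative ln x ^ n * x powr (-1)) (at x)"
      using xp by (simp add: powr_minus_divide field_simps del: of_nat_Suc)
    then show "((\<lambda>x. ln x ^ Suc n / real (Suc n)) has_vector_derivative ln x ^ n * x powr (-1)) (at x within {real k + 1..real k + 2})"
      unfolding has_real_derivative_iff_has_vector_derivative[symmetric]
      by (rule has_field_derivative_at_within)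
  qed simp
  then have "integral {real k + 1..real k + 2} (\<lambda>x. ln x ^ n * x powr (-1)) =
     ln (real k + 2) ^ Suc n / real (Suc n) - ln (real k + 1) ^ Suc n / real (Suc n)"
    by (rule integral_unique)
  moreover have "(real k + a) powr (-1) = 1 / (real k + a)" using assms by (simp add: powr_minus_divide)
  ultimately show ?thesis unfolding hh_def by (simp add: add.commute)
qed

lemma GG_lim:
  assumes "a > 0" "n \<le> 2"
  shows "(\<lambda>N. (\<Sum>k<N. ln (real k + a) ^ n / (real k + a)) - ln (real N + 1) ^ Suc n / real (Suc n))
     \<longlonglongrightarrow> GG a n 1"
proof -
  have "(\<lambda>N. \<Sum>k<N. hh a n k 1) \<longlonglongrightarrow> GG a n 1"
    unfolding GG_def using assms by (intro summable_LIMSEQ hh_summable) auto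
  moreover have "(\<Sum>k<N. hh a n k 1) = (\<Sum>k<N. ln (real k + a) ^ n / (real k + a)) - ln (real N + 1) ^ Suc n / real (Suc n)" for N
  proof -
    let ?F = "\<lambda>k. ln (real k + 1) ^ Suc n / real (Suc n)"
    have "(\<Sum>k<N. hh a n k 1) = (\<Sum>k<N. ln (real k + a) ^ n / (real k + a)) - (\<Sum>k<N. ?F (Suc k) - ?F k)"
      unfolding hh_at1[OF assms(1)] by (simp add: sum_subtractf)
    also have "(\<Sum>k<N. ?F (Suc k) - ?F k) = ?F N - ?F 0" by (rule sum_lessThan_telescope)
    finally show ?thesis by simp
  qed
  ultimately show ?thesis by simp
qed

lemma stieltjes_GG: "a > 0 \<Longrightarrow> n \<in> {1, 2} \<Longrightarrow> stieltjes n a = GG a n 1"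
  using stieltjes1 stieltjes2 by auto

lemma stieltjes_diff:
  assumes "a > 0" "b > 0" "n \<in> {1, 2}"
  shows "(\<lambda>N. \<Sum>k<N. (ln (real k + a) ^ n / (real k + a) - ln (real k + b) ^ n / (real k + b)))
     \<longlonglongrightarrow> stieltjes n a - stieltjes n b"
proof -
  have "(\<lambda>N. ((\<Sum>k<N. ln (real k + a) ^ n / (real k + a)) - ln (real N + 1) ^ Suc n / real (Suc n))
       - ((\<Sum>k<N. ln (real k + b) ^ n / (real k + b)) - ln (real N + 1) ^ Suc n / real (Suc n)))
     \<longlonglongrightarrow> GG a n 1 - GG b n 1"
    using assms by (intro tendsto_diff GG_lim) auto
  then show ?thesis using assms by (simp add: stieltjes_GG sum_subtractf)
qed

lemma digamma_diff:
  assumes "a > 0" "b > 0"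
  shows "(\<lambda>N. \<Sum>k<N. (1 / (real k + a) - 1 / (real k + b))) \<longlonglongrightarrow> Digamma b - Digamma a"
proof -
  have A: "(\<lambda>m. ln (real m) - (\<Sum>n<m. inverse (a + real n))) \<longlonglongrightarrow> Digamma a"
    using Digamma_LIMSEQ[of a] assms by simp
  have B: "(\<lambda>m. ln (real m) - (\<Sum>n<m. inverse (b + real n))) \<longlonglongrightarrow> Digamma b"
    using Digamma_LIMSEQ[of b] assms by simp
  from tendsto_diff[OF B A] show ?thesis
    by (simp add: sum_subtractf divide_inverse add.commute)
qed



lemma diff_under_integral:
  fixes f f' :: "real \<Rightarrow> real \<Rightarrow> real" and S :: "real set" and g :: "real \<Rightarrow> real"
  assumes s0: "s0 \<in> {lo<..<hi}"
   and der: "\<And>s t. s \<in> {lo<..<hi} \<Longrightarrow> t \<in> S \<Longrightarrow> ((\<lambda>s. f s t) has_real_derivative f' s t) (at s)"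
   and int: "\<And>s. s \<in> {lo<..<hi} \<Longrightarrow> f s integrable_on S"
   and bnd: "\<And>s t. s \<in> {lo<..<hi} \<Longrightarrow> t \<in> S \<Longrightarrow> \<bar>f' s t\<bar> \<le> g t"
   and gi: "g integrable_on S"
  shows "((\<lambda>s. integral S (f s)) has_real_derivative integral S (f' s0)) (at s0)"
    and "f' s0 integrable_on S"
proof -
  let ?U = "{lo<..<hi}"
  obtain X0 where X0: "\<And>i. X0 i \<in> ?U - {s0}" "X0 \<longlonglongrightarrow> s0"
  proof -
    define X0 where "X0 = (\<lambda>i::nat. s0 + (hi - s0) / (real i + 2))"
    have fl: "filterlim (\<lambda>i. real i + 2) at_top sequentially"
      by (rule filterlim_at_top_mono[OF filterlim_real_sequentially]) auto
    have "X0 \<longlonglongrightarrow> s0 + 0"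
      unfolding X0_def
      by (intro tendsto_add tendsto_const tendsto_divide_0[OF tendsto_const]
          filterlim_at_top_imp_at_infinity[OF fl])
    moreover have "X0 i \<in> ?U - {s0}" for i
    proof -
      have "0 < (hi - s0) / (real i + 2)" using s0 by auto
      moreover have "(hi - s0) / (real i + 2) < hi - s0" using s0 by (simp add: divide_less_eq)
      ultimately show ?thesis using s0 unfolding X0_def by auto
    qed
    ultimately show ?thesis using that by auto
  qed
  have key: "(\<lambda>n. (integral S (f (X n)) - integral S (f s0)) / (X n - s0)) \<longlonglongrightarrow> integral S (f' s0)
       \<and> f' s0 integrable_on S"
    if X: "\<And>i. X i \<in> ?U - {s0}" "X \<longlonglongrightarrow> s0" for X
  proof -
    define q where "q = (\<lambda>n t. (f (X n) t - f s0 t) / (X n - s0))"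
    have qi: "q n integrable_on S" for n
      unfolding q_def using X s0 by (intro integrable_on_divide integrable_diff int) auto
    have qb: "norm (q n t) \<le> g t" if t: "t \<in> S" for n t
    proof -
      have gen: "\<bar>f v t - f u t\<bar> \<le> g t * (v - u)" if "u \<in> ?U" "v \<in> ?U" "u \<le> v" for u v
        by (rule lip_bound[OF \<open>u \<le> v\<close>, of "\<lambda>s. f s t" "\<lambda>s. f' s t"])
           (use that t in \<open>auto intro!: der bnd\<close>)
      have ne: "X n \<noteq> s0" and xu: "X n \<in> ?U" using X(1)[of n] by auto
      show ?thesis
      proof (cases "X n < s0")
        case True
        from gen[OF xu s0] True have "\<bar>f s0 t - f (X n) t\<bar> \<le> g t * (s0 - X n)" by simp
        then show ?thesis unfolding q_def using True
          by (simp add: abs_divide abs_minus_commute divide_le_eq)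
      next
        case False
        then have "s0 < X n" using ne by simp
        from gen[OF s0 xu] this have "\<bar>f (X n) t - f s0 t\<bar> \<le> g t * (X n - s0)" by simp
        then show ?thesis unfolding q_def using \<open>s0 < X n\<close>
          by (simp add: abs_divide divide_le_eq)
      qed
    qed
    have qc: "(\<lambda>n. q n t) \<longlonglongrightarrow> f' s0 t" if t: "t \<in> S" for t
    proof -
      have "((\<lambda>y. (f y t - f s0 t) / (y - s0)) \<longlongrightarrow> f' s0 t) (at s0)"
        using der[OF s0 t] unfolding has_field_derivative_iff .
      then have "((\<lambda>y. (f y t - f s0 t) / (y - s0)) \<longlongrightarrow> f' s0 t) (at s0 within UNIV)" by simp
      then show ?thesis unfolding tendsto_at_iff_sequentially q_def o_def using X by auto
    qed
    from dominated_convergence[OF qi gi qb qc]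
    have "f' s0 integrable_on S" "(\<lambda>n. integral S (q n)) \<longlonglongrightarrow> integral S (f' s0)" by auto
    moreover have "integral S (q n) = (integral S (f (X n)) - integral S (f s0)) / (X n - s0)" for n
      unfolding q_def using X s0 by (subst integral_divide) (auto intro!: integral_diff int)
    ultimately show ?thesis by simp
  qed
  from key[OF X0] show "f' s0 integrable_on S" by simp
  have "((\<lambda>y. (integral S (f y) - integral S (f s0)) / (y - s0)) \<longlongrightarrow> integral S (f' s0)) (at s0 within ?U)"
    unfolding tendsto_at_iff_sequentially o_def using key by blast
  then have "((\<lambda>s. integral S (f s)) has_real_derivative integral S (f' s0)) (at s0 within ?U)"
    unfolding has_field_derivative_iff .
  then show "((\<lambda>s. integral S (f s)) has_real_derivative integral S (f' s0)) (at s0)"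
    using at_within_open[OF s0] by simp
qed

lemma gamma_int:
  assumes "(\<sigma>::real) > 0"
  shows "((\<lambda>t. t powr (\<sigma> - 1) / exp t) has_integral Gamma \<sigma>) {0<..}"
proof -
  have A: "((\<lambda>t. t powr (\<sigma> - 1) / exp t) has_integral Gamma \<sigma>) {0..}"
    by (rule Gamma_integral_real[OF assms])
  have N1: "negligible {x \<in> {0..} - {0<..}. x powr (\<sigma> - 1) / exp x \<noteq> 0}"
    by (rule negligible_subset[of "{0}"]) auto
  have N2: "negligible {x \<in> {0<..} - {0..}. x powr (\<sigma> - 1) / exp x \<noteq> (0::real)}"
    by (rule negligible_subset[of "{}"]) auto
  show ?thesis using has_integral_spike_set_eq[OF N1 N2] A by simp
qed

lemma logbound:
  assumes t: "(t::real) > 0" and s: "3/4 \<le> s" "s \<le> 5/4" and j: "j \<le> (2::nat)"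
  shows "\<bar>ln t ^ j * t powr (s - 1)\<bar> \<le> 64 * (t powr (-1/2) + t)"
proof (cases "t \<le> 1")
  case True
  have y: "1 \<le> 1 / t" using t True by simp
  have a: "ln (1/t) ^ j \<le> 64 * (1/t) powr (1/4)" by (rule lnpow_le[OF y j])
  have b: "\<bar>ln t ^ j\<bar> = ln (1/t) ^ j" using t True
    by (simp add: ln_div power_abs abs_of_nonpos)
  have c: "(1/t) powr (1/4) = t powr (-1/4)" using t by (simp add: powr_divide powr_minus_divide)
  have d: "t powr (s - 1) \<le> t powr (-1/4)" using t True s by (intro powr_mono') auto
  have "\<bar>ln t ^ j * t powr (s - 1)\<bar> = \<bar>ln t ^ j\<bar> * t powr (s - 1)" by (simp add: abs_mult)
  also have "\<dots> \<le> (64 * t powr (-1/4)) * t powr (-1/4)"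
    using a b c d by (intro mult_mono) auto
  also have "\<dots> = 64 * t powr (-1/2)" by (simp add: mult.assoc flip: powr_add)
  also have "\<dots> \<le> 64 * (t powr (-1/2) + t)" using t by simp
  finally show ?thesis .
next
  case False
  then have y: "1 \<le> t" by simp
  have a: "ln t ^ j \<le> 64 * t powr (1/4)" by (rule lnpow_le[OF y j])
  have a0: "0 \<le> ln t ^ j" using y by simp
  have d: "t powr (s - 1) \<le> t powr (1/4)" using y s by (intro powr_mono) auto
  have "\<bar>ln t ^ j * t powr (s - 1)\<bar> = ln t ^ j * t powr (s - 1)" using a0 by (simp add: abs_mult)
  also have "\<dots> \<le> (64 * t powr (1/4)) * t powr (1/4)"
    using a a0 d by (intro mult_mono) auto
  also have "\<dots> = 64 * t powr (1/2)" by (simp add: mult.assoc flip: powr_add)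
  also have "\<dots> \<le> 64 * (t powr (-1/2) + t)"
  proof -
    have a: "t powr (1/2) \<le> t" using y powr_mono[of "1/2" 1 t] by simp
    have b: "0 \<le> t powr (-1/2)" by simp
    have "64 * t powr (1/2) \<le> 64 * t powr (-1/2) + 64 * t" using a b by linarith
    then show ?thesis by (simp only: distrib_left)
  qed
  finally show ?thesis .
qed

definition gdom :: "real \<Rightarrow> real" where "gdom t = 64 * (t powr (-1/2) + t) / exp t"

lemma gdom_int: "gdom integrable_on {0<..}"
proof -
  have "(\<lambda>t::real. t powr (1/2 - 1) / exp t) integrable_on {0<..}"
    using gamma_int[of "1/2"] by auto
  moreover have "(\<lambda>t::real. t powr (2 - 1) / exp t) integrable_on {0<..}"
    using gamma_int[of "2"] by auto
  ultimately have "(\<lambda>t::real. 64 * (t powr (1/2 - 1) / exp t + t powr (2 - 1) / exp t)) integrable_on {0<..}"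
    by (intro integrable_on_cmult_left[where c=64, simplified] integrable_add)
  then show ?thesis
    by (rule integrable_eq) (simp add: gdom_def add_divide_distrib)
qed

lemma not_nonpos_int: "(s::real) > 0 \<Longrightarrow> s \<notin> \<int>\<^sub>\<le>\<^sub>0"
  by (auto elim!: nonpos_Ints_cases)

lemma Polygamma_1_1: "Polygamma 1 (1::real) = pi\<^sup>2 / 6"
proof -
  have "(\<lambda>k. inverse ((1 + of_nat k) ^ Suc 1)) sums ((-1) ^ Suc 1 * Polygamma 1 (1::real) / fact 1)"
    by (rule Polygamma_LIMSEQ) auto
  moreover have e: "inverse ((1 + of_nat n :: real) ^ Suc 1) = 1 / real ((n + 1)\<^sup>2)" for n
    by (simp add: inverse_eq_divide power2_eq_square algebra_simps)
  ultimately have "(\<lambda>n. 1 / real ((n + 1)\<^sup>2)) sums Polygamma 1 (1::real)"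
    by (simp only: e) simp
  from sums_unique2[OF this inverse_squares_sums] show ?thesis .
qed

lemma gamma_moments:
  shows "((\<lambda>t::real. 1 / exp t) has_integral 1) {0<..}"
    and "((\<lambda>t::real. ln t / exp t) has_integral (- euler_mascheroni)) {0<..}"
    and "((\<lambda>t::real. ln t ^ 2 / exp t) has_integral (euler_mascheroni\<^sup>2 + pi\<^sup>2 / 6)) {0<..}"
proof -
  let ?U = "{3/4<..<5/4::real}" and ?S = "{0::real<..}"
  define f where "f = (\<lambda>s t::real. t powr (s - 1) / exp t)"
  define f1 where "f1 = (\<lambda>s t::real. ln t * t powr (s - 1) / exp t)"
  define f2 where "f2 = (\<lambda>s t::real. ln t ^ 2 * t powr (s - 1) / exp t)"
  have d0: "((\<lambda>s. f s t) has_real_derivative f1 s t) (at s)" if "t \<in> ?S" for s t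
    using that unfolding f_def f1_def by (auto intro!: derivative_eq_intros simp: powr_def)
  have d1: "((\<lambda>s. f1 s t) has_real_derivative f2 s t) (at s)" if "t \<in> ?S" for s t
    using that unfolding f1_def f2_def by (auto intro!: derivative_eq_intros simp: powr_def power2_eq_square)
  have b1: "\<bar>f1 s t\<bar> \<le> gdom t" if "s \<in> ?U" "t \<in> ?S" for s t
  proof -
    have "\<bar>ln t * t powr (s - 1)\<bar> \<le> 64 * (t powr (-1/2) + t)" using logbound[of t s 1] that by simp
    then show ?thesis unfolding f1_def gdom_def by (simp add: abs_divide divide_right_mono)
  qed
  have b2: "\<bar>f2 s t\<bar> \<le> gdom t" if "s \<in> ?U" "t \<in> ?S" for s t
  proof -
    have "\<bar>ln t ^ 2 * t powr (s - 1)\<bar> \<le> 64 * (t powr (-1/2) + t)" using logbound[of t s 2] that by simp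
    then show ?thesis unfolding f2_def gdom_def by (simp add: abs_divide divide_right_mono)
  qed
  have fi: "f s integrable_on ?S" if "s \<in> ?U" for s
    using gamma_int[of s] that unfolding f_def by auto
  have fG: "integral ?S (f s) = Gamma s" if "s \<in> ?U" for s
    using gamma_int[of s] that unfolding f_def by (auto intro: integral_unique)
  have D1: "((\<lambda>s. integral ?S (f s)) has_real_derivative integral ?S (f1 s)) (at s)"
       and f1i: "f1 s integrable_on ?S" if "s \<in> ?U" for s
    using diff_under_integral[OF that d0 fi b1 gdom_int] by auto
  have f1G: "integral ?S (f1 s) = Gamma s * Digamma s" if s: "s \<in> ?U" for s
  proof -
    have "(Gamma has_real_derivative integral ?S (f1 s)) (at s)"
      by (rule has_field_derivative_transform_within_open[OF D1[OF s], of ?U]) (use s fG in auto)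
    moreover have "(Gamma has_real_derivative Gamma s * Digamma s) (at s)"
      using s by (intro has_field_derivative_Gamma not_nonpos_int) auto
    ultimately show ?thesis by (rule DERIV_unique)
  qed
  have one: "(1::real) \<in> ?U" by simp
  have D2: "((\<lambda>s. integral ?S (f1 s)) has_real_derivative integral ?S (f2 1)) (at 1)"
       and f2i: "f2 1 integrable_on ?S"
    using diff_under_integral[OF one d1 f1i b2 gdom_int] by auto
  have "((\<lambda>s. Gamma s * Digamma s) has_real_derivative integral ?S (f2 1)) (at 1)"
    by (rule has_field_derivative_transform_within_open[OF D2, of ?U]) (use f1G in auto)
  moreover have "((\<lambda>s. Gamma s * Digamma s) has_real_derivative
      Gamma 1 * Digamma 1 * Digamma 1 + Polygamma 1 (1::real) * Gamma 1) (at 1)"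
  proof (rule DERIV_mult)
    show "(Gamma has_real_derivative Gamma 1 * Digamma 1) (at 1)"
      by (rule has_field_derivative_Gamma) (rule not_nonpos_int, simp)
    show "(Digamma has_real_derivative Polygamma 1 1) (at (1::real))"
      using has_field_derivative_Polygamma[of "1::real" 0 UNIV] not_nonpos_int[of 1] by simp
  qed
  ultimately have X: "integral ?S (f2 1) = Gamma 1 * Digamma 1 * Digamma 1 + Polygamma 1 (1::real) * Gamma 1"
    by (rule DERIV_unique)
  have M2: "integral ?S (f2 1) = euler_mascheroni\<^sup>2 + pi\<^sup>2 / 6"
    using X unfolding Polygamma_1_1 by (simp add: power2_eq_square)
  have M1: "integral ?S (f1 1) = - euler_mascheroni" using f1G[OF one] by simp
  show "((\<lambda>t::real. 1 / exp t) has_integral 1) {0<..}"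
    by (rule has_integral_eq[OF _ gamma_int[of 1, simplified]]) simp
  have A1: "(f1 1 has_integral (- euler_mascheroni)) ?S"
    using integrable_integral[OF f1i[OF one]] unfolding M1 .
  show "((\<lambda>t::real. ln t / exp t) has_integral (- euler_mascheroni)) {0<..}"
    by (rule has_integral_eq[OF _ A1]) (simp add: f1_def)
  have A2: "(f2 1 has_integral (euler_mascheroni\<^sup>2 + pi\<^sup>2 / 6)) ?S"
    using integrable_integral[OF f2i] unfolding M2 .
  show "((\<lambda>t::real. ln t ^ 2 / exp t) has_integral (euler_mascheroni\<^sup>2 + pi\<^sup>2 / 6)) {0<..}"
    by (rule has_integral_eq[OF _ A2]) (simp add: f2_def)
qed



lemma one_plus_exp_pos [simp]: "0 < 1 + exp (y::real)"
  using exp_gt_zero[of y] by linarith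

lemma one_plus_exp_ne [simp]: "1 + exp (y::real) \<noteq> 0"
  using exp_gt_zero[of y] by linarith

lemma div_one_plus_le: "0 \<le> (A::real) \<Longrightarrow> 0 \<le> r \<Longrightarrow> \<bar>A / (1 + r)\<bar> \<le> A"
proof -
  assume A: "0 \<le> A" and r: "0 \<le> r"
  have "A * 1 \<le> A * (1 + r)" using A r by (intro mult_left_mono) auto
  then show ?thesis using A r by (simp add: abs_divide divide_le_eq)
qed

abbreviation "M2 \<equiv> euler_mascheroni\<^sup>2 + pi\<^sup>2 / 6"

lemma int_ln2: "(\<lambda>t::real. ln t ^ 2 / exp t) integrable_on {0<..}"
  using gamma_moments(3) by blast

lemma absint_ln2: "(\<lambda>t::real. ln t ^ 2 / exp t) absolutely_integrable_on {0<..}"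
  by (rule nonnegative_absolutely_integrable_1[OF int_ln2]) simp

definition Fc :: "real \<Rightarrow> real" where
  "Fc c = (M2 + 2 * euler_mascheroni * ln c + ln c ^ 2) / c"

lemma Fc_integral:
  assumes c: "c > 0"
  shows "(\<lambda>t. ln t ^ 2 / exp (c * t)) integrable_on {0<..}"
    and "integral {0<..} (\<lambda>t. ln t ^ 2 / exp (c * t)) = Fc c"
proof -
  let ?S = "{0::real<..}"
  let ?h = "\<lambda>u::real. (1/c) * (ln u ^ 2 / exp u - 2 * ln c * (ln u / exp u) + ln c ^ 2 * (1 / exp u))"
  have H: "(?h has_integral (1/c) * (M2 - 2 * ln c * (- euler_mascheroni) + ln c ^ 2 * 1)) ?S"
    by (intro has_integral_mult_right has_integral_add has_integral_diff gamma_moments)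
  have eq: "?h u = \<bar>1 / c\<bar> * (ln (u / c) ^ 2 / exp (c * (u / c)))" if "u \<in> ?S" for u
    using that c by (simp add: ln_div power2_eq_square field_simps)
  have H2: "((\<lambda>u. \<bar>1 / c\<bar> * (ln (u / c) ^ 2 / exp (c * (u / c)))) has_integral
        (1/c) * (M2 - 2 * ln c * (- euler_mascheroni) + ln c ^ 2 * 1)) ?S"
    by (rule has_integral_eq[OF eq H])
  have A: "(\<lambda>u. \<bar>1 / c\<bar> * (ln (u / c) ^ 2 / exp (c * (u / c)))) absolutely_integrable_on ?S"
    using H2 by (intro nonnegative_absolutely_integrable_1) (auto simp: has_integral_iff)
  have img: "(\<lambda>u. u / c) ` ?S = ?S"
  proof
    show "(\<lambda>u. u / c) ` ?S \<subseteq> ?S" using c by auto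
    show "?S \<subseteq> (\<lambda>u. u / c) ` ?S"
    proof
      fix x :: real assume "x \<in> ?S"
      then show "x \<in> (\<lambda>u. u / c) ` ?S" using c by (intro image_eqI[of _ _ "x * c"]) auto
    qed
  qed
  have "(\<lambda>t. ln t ^ 2 / exp (c * t)) absolutely_integrable_on (\<lambda>u. u / c) ` ?S \<and>
        integral ((\<lambda>u. u / c) ` ?S) (\<lambda>t. ln t ^ 2 / exp (c * t)) = (1/c) * (M2 - 2 * ln c * (- euler_mascheroni) + ln c ^ 2 * 1)"
  proof (rule has_absolute_integral_change_of_variables_1'[THEN iffD1])
    show "?S \<in> sets lebesgue" by simp
    show "((\<lambda>u. u / c) has_real_derivative 1 / c) (at x within ?S)" for x
      using c by (auto intro!: derivative_eq_intros)
    show "inj_on (\<lambda>u. u / c) ?S" using c by (auto simp: inj_on_def)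
    show "(\<lambda>x. \<bar>1 / c\<bar> * (ln (x / c) ^ 2 / exp (c * (x / c)))) absolutely_integrable_on ?S \<and>
      integral ?S (\<lambda>x. \<bar>1 / c\<bar> * (ln (x / c) ^ 2 / exp (c * (x / c)))) =
      1 / c * (M2 - 2 * ln c * - euler_mascheroni + ln c ^ 2 * 1)"
      using A H2 by (auto simp: has_integral_iff)
  qed
  then have R: "(\<lambda>t. ln t ^ 2 / exp (c * t)) absolutely_integrable_on ?S"
     "integral ?S (\<lambda>t. ln t ^ 2 / exp (c * t)) = (1/c) * (M2 - 2 * ln c * (- euler_mascheroni) + ln c ^ 2 * 1)"
    unfolding img by auto
  from R(1) show "(\<lambda>t. ln t ^ 2 / exp (c * t)) integrable_on {0<..}"
    using set_lebesgue_integral_eq_integral(1) by blast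
  from R(2) show "integral {0<..} (\<lambda>t. ln t ^ 2 / exp (c * t)) = Fc c"
    unfolding Fc_def by (simp add: field_simps)
qed

definition KK :: "real \<Rightarrow> real \<Rightarrow> real" where
  "KK p t = ln t ^ 2 / exp t / (1 + exp (- (p * t)))"

lemma KK_bound: "norm (KK p t) \<le> ln t ^ 2 / exp t"
  unfolding KK_def real_norm_def by (rule div_one_plus_le) auto

lemma KK_absint:
  assumes "p \<ge> 0"
  shows "KK p absolutely_integrable_on {0<..}"
proof -
  have m: "KK p \<in> borel_measurable (lebesgue_on {0<..})"
    unfolding KK_def
    by (rule continuous_imp_measurable_on_sets_lebesgue) (auto intro!: continuous_intros)
  have "KK p integrable_on {0<..}"
  proof (rule measurable_bounded_by_integrable_imp_integrable[OF m int_ln2])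
    fix t :: real assume "t \<in> {0<..}"
    show "norm (KK p t) \<le> ln t ^ 2 / exp t" by (rule KK_bound)
  qed simp
  then show ?thesis
    by (rule nonnegative_absolutely_integrable_1) (use assms in \<open>simp add: KK_def\<close>)
qed

lemma J2_eq:
  assumes p: "p > 0"
  shows "J2 p = integral {0<..} (KK p)"
proof -
  let ?S = "{0::real<..}"
  let ?g = "\<lambda>t::real. exp (- t)"
  let ?f = "\<lambda>x::real. (ln (- ln x))\<^sup>2 / (1 + x powr p)"
  have img: "?g ` ?S = {0<..<1}"
  proof
    show "?g ` ?S \<subseteq> {0<..<1}" by auto
    show "{0<..<1} \<subseteq> ?g ` ?S"
    proof
      fix x :: real assume x: "x \<in> {0<..<1}"
      then show "x \<in> ?g ` ?S" by (intro image_eqI[of _ _ "- ln x"]) auto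
    qed
  qed
  have eq: "\<bar>- exp (- t)\<bar> * ?f (?g t) = KK p t" if "t \<in> ?S" for t
  proof -
    have "?f (?g t) = ln t ^ 2 / (1 + exp (- (p * t)))" by (simp add: powr_def)
    then show ?thesis unfolding KK_def by (simp only:) (simp add: exp_minus field_simps)
  qed
  have A: "(\<lambda>t. \<bar>- exp (- t)\<bar> * ?f (?g t)) absolutely_integrable_on ?S"
  proof (rule nonnegative_absolutely_integrable_1)
    have "KK p integrable_on ?S"
      using KK_absint[of p] p set_lebesgue_integral_eq_integral(1) by auto
    then show "(\<lambda>t. \<bar>- exp (- t)\<bar> * ?f (?g t)) integrable_on ?S"
      by (rule integrable_eq) (simp only: eq)
  qed simp
  have "?f absolutely_integrable_on ?g ` ?S \<and> integral (?g ` ?S) ?f = integral ?S (KK p)"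
  proof (rule has_absolute_integral_change_of_variables_1'[THEN iffD1])
    show "?S \<in> sets lebesgue" by simp
    show "(?g has_real_derivative - exp (- x)) (at x within ?S)" for x
      by (auto intro!: derivative_eq_intros)
    show "inj_on ?g ?S" by (auto simp: inj_on_def)
    show "(\<lambda>x. \<bar>- exp (- x)\<bar> * ?f (?g x)) absolutely_integrable_on ?S \<and>
      integral ?S (\<lambda>x. \<bar>- exp (- x)\<bar> * ?f (?g x)) = integral ?S (KK p)"
      using A eq by (auto intro: integral_cong)
  qed
  then show ?thesis unfolding img J2_def by simp
qed



lemma geom_bound:
  assumes "0 \<le> r" "r < (1::real)"
  shows "\<bar>\<Sum>k<N. (- r) ^ k\<bar> \<le> 1"
proof -
  have ne: "- r \<noteq> 1" using assms by simp
  have E: "(\<Sum>k<N. (- r) ^ k) = (1 - (- r) ^ N) / (1 + r)"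
    using ne by (simp add: sum_gp_strict)
  have B: "\<bar>1 - (- r) ^ N\<bar> \<le> 1 + r"
  proof -
    have "\<bar>(- r) ^ N\<bar> = r ^ N" using assms by (simp add: power_abs)
    moreover have "r ^ N \<le> r \<or> N = 0"
    proof (cases N)
      case (Suc n)
      have "r ^ n \<le> 1" using assms by (intro power_le_one) auto
      then have "r * r ^ n \<le> r" using assms mult_left_le[of "r ^ n" r] by simp
      then show ?thesis using Suc by simp
    qed simp
    ultimately have "\<bar>(- r) ^ N\<bar> \<le> r \<or> N = 0" by auto
    then show ?thesis
    proof
      assume h: "\<bar>(- r) ^ N\<bar> \<le> r"
      have "\<bar>1 - (- r) ^ N\<bar> \<le> \<bar>1\<bar> + \<bar>(- r) ^ N\<bar>" by (rule abs_triangle_ineq4)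
      moreover have "\<bar>1::real\<bar> = 1" by simp
      ultimately show ?thesis using h by linarith
    qed (use assms in simp)
  qed
  have pos: "0 < 1 + r" using assms by simp
  have "\<bar>(1 - (- r) ^ N) / (1 + r)\<bar> = \<bar>1 - (- r) ^ N\<bar> / (1 + r)"
    using pos by (simp only: abs_divide abs_of_pos)
  also have "\<dots> \<le> 1" by (subst divide_le_eq_1_pos[OF pos]) (rule B)
  finally show ?thesis unfolding E .
qed

definition fN :: "real \<Rightarrow> nat \<Rightarrow> real \<Rightarrow> real" where
  "fN p N t = (\<Sum>k<N. (-1) ^ k * (ln t ^ 2 / exp ((1 + p * real k) * t)))"

lemma fN_alt: "fN p N t = ln t ^ 2 / exp t * (\<Sum>k<N. (- exp (- (p * t))) ^ k)"
proof -
  have eq: "(-1) ^ k * (ln t ^ 2 / exp ((1 + p * real k) * t)) = ln t ^ 2 / exp t * (- exp (- (p * t))) ^ k" for k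
  proof -
    have "(1 + p * real k) * t = t + real k * (p * t)" by (simp add: algebra_simps)
    then have "exp ((1 + p * real k) * t) = exp t * exp (real k * (p * t))" by (simp only: exp_add)
    then have e1: "exp ((1 + p * real k) * t) = exp t * exp (p * t) ^ k" by (simp only: exp_of_nat_mult)
    have "(- exp (- (p * t))) ^ k = ((-1) * inverse (exp (p * t))) ^ k" by (simp add: exp_minus)
    also have "\<dots> = (-1) ^ k * inverse (exp (p * t) ^ k)" by (simp only: power_mult_distrib power_inverse)
    finally have e2: "(- exp (- (p * t))) ^ k = (-1) ^ k * inverse (exp (p * t) ^ k)" .
    show ?thesis unfolding e1 e2 by (simp only: divide_inverse inverse_mult_distrib mult_ac)
  qed
  show ?thesis unfolding fN_def sum_distrib_left by (rule sum.cong[OF refl eq])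
qed

lemma fN_integral:
  assumes p: "p > 0"
  shows "fN p N integrable_on {0<..}"
    and "integral {0<..} (fN p N) = (\<Sum>k<N. (-1) ^ k * Fc (1 + p * real k))"
proof -
  have i: "(\<lambda>t. (-1) ^ k * (ln t ^ 2 / exp ((1 + p * real k) * t))) integrable_on {0<..}" for k
  proof -
    have "0 < 1 + p * real k" using p by (intro add_pos_nonneg) auto
    from integrable_on_mult_right[OF Fc_integral(1)[OF this], of "(-1) ^ k"] show ?thesis .
  qed
  show "fN p N integrable_on {0<..}" unfolding fN_def
    by (rule integrable_sum) (use i in auto)
  have "integral {0<..} (fN p N) = (\<Sum>k<N. integral {0<..} (\<lambda>t. (-1) ^ k * (ln t ^ 2 / exp ((1 + p * real k) * t))))"
    unfolding fN_def by (rule integral_sum) (use i in auto)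
  also have "\<dots> = (\<Sum>k<N. (-1) ^ k * Fc (1 + p * real k))"
  proof (rule sum.cong)
    fix k assume "k \<in> {..<N}"
    have "integral {0<..} (\<lambda>t. (-1) ^ k * (ln t ^ 2 / exp ((1 + p * real k) * t)))
        = (-1) ^ k * integral {0<..} (\<lambda>t. ln t ^ 2 / exp ((1 + p * real k) * t))"
    proof (rule integral_mult[symmetric])
      have "0 < 1 + p * real k" using p by (intro add_pos_nonneg) auto
      then show "(\<lambda>t. ln t ^ 2 / exp ((1 + p * real k) * t)) integrable_on {0<..}" by (rule Fc_integral(1))
    qed
    also have "\<dots> = (-1) ^ k * Fc (1 + p * real k)"
    proof -
      have "0 < 1 + p * real k" using p by (intro add_pos_nonneg) auto
      then show ?thesis by (simp only: Fc_integral(2))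
    qed
    finally show "integral {0<..} (\<lambda>t. (-1) ^ k * (ln t ^ 2 / exp ((1 + p * real k) * t))) = (-1) ^ k * Fc (1 + p * real k)" .
  qed simp
  finally show "integral {0<..} (fN p N) = (\<Sum>k<N. (-1) ^ k * Fc (1 + p * real k))" .
qed

lemma J2_series:
  assumes p: "p > 0"
  shows "(\<lambda>N. \<Sum>k<N. (-1) ^ k * Fc (1 + p * real k)) \<longlonglongrightarrow> J2 p"
proof -
  have "(\<lambda>N. integral {0<..} (fN p N)) \<longlonglongrightarrow> integral {0<..} (KK p)"
  proof (rule dominated_convergence(2)[OF fN_integral(1)[OF p] int_ln2])
    fix N and t :: real assume t: "t \<in> {0<..}"
    have r: "0 \<le> exp (- (p * t))" "exp (- (p * t)) < 1" using p t by auto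
    have "norm (fN p N t) = ln t ^ 2 / exp t * \<bar>\<Sum>k<N. (- exp (- (p * t))) ^ k\<bar>"
    proof -
      have "\<bar>ln t ^ 2 / exp t\<bar> = ln t ^ 2 / exp t" by simp
      then show ?thesis unfolding fN_alt real_norm_def abs_mult by (simp only:)
    qed
    also have "\<dots> \<le> ln t ^ 2 / exp t * 1"
      by (intro mult_left_mono geom_bound r) simp
    finally show "norm (fN p N t) \<le> ln t ^ 2 / exp t" by simp
  next
    fix t :: real assume t: "t \<in> {0<..}"
    have "norm (- exp (- (p * t))) < 1" using p t by simp
    from geometric_sums[OF this]
    have "(\<lambda>N. \<Sum>k<N. (- exp (- (p * t))) ^ k) \<longlonglongrightarrow> 1 / (1 - - exp (- (p * t)))"
      unfolding sums_def[symmetric] .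
    then have "(\<lambda>N. ln t ^ 2 / exp t * (\<Sum>k<N. (- exp (- (p * t))) ^ k)) \<longlonglongrightarrow> ln t ^ 2 / exp t * (1 / (1 - - exp (- (p * t))))"
      by (intro tendsto_mult tendsto_const)
    moreover have "ln t ^ 2 / exp t * (1 / (1 - - exp (- (p * t)))) = KK p t"
      unfolding KK_def by simp
    moreover have "(\<lambda>N. fN p N t) = (\<lambda>N. ln t ^ 2 / exp t * (\<Sum>k<N. (- exp (- (p * t))) ^ k))"
      by (simp only: fN_alt)
    ultimately show "(\<lambda>N. fN p N t) \<longlonglongrightarrow> KK p t" by (simp only:)
  qed
  then show ?thesis using fN_integral(2)[OF p] J2_eq[OF p] by (simp only:)
qed



lemma sum_pairs: "(\<Sum>k<2 * N. f k) = (\<Sum>m<N. f (2 * m) + f (2 * m + 1))"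
  for f :: "nat \<Rightarrow> real"
proof (induction N)
  case (Suc N)
  have "2 * Suc N = Suc (Suc (2 * N))" by simp
  then show ?case using Suc by (simp add: add.assoc)
qed simp

lemma Fc_scaled:
  assumes c: "c > 0" and x: "x > 0"
  shows "Fc (c * x) = (1 / c) * ((M2 + 2 * euler_mascheroni * ln c + ln c ^ 2) * (1 / x)
      + (2 * euler_mascheroni + 2 * ln c) * (ln x ^ 1 / x) + ln x ^ 2 / x)"
proof -
  have "ln (c * x) = ln c + ln x" using c x by (simp add: ln_mult)
  then show ?thesis unfolding Fc_def using c x
    by (simp add: field_simps power2_eq_square)
qed

lemma sum_lin: "(\<Sum>m<N. c * (A * u m + B * v m + w m)) = c * (A * (\<Sum>m<N. u m) + B * (\<Sum>m<N. v m) + (\<Sum>m<N. w m))"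
  for c A B :: real
  by (simp add: sum.distrib sum_distrib_left distrib_left)

lemma J2_formula:
  assumes p: "p > 0"
  defines "a \<equiv> 1 / (2 * p)" and "b \<equiv> (p + 1) / (2 * p)"
  defines "L \<equiv> ln (2 * p)"
  shows "J2 p = (1 / (2 * p)) * ((M2 + 2 * euler_mascheroni * L + L ^ 2) * (Digamma b - Digamma a)
      + (2 * euler_mascheroni + 2 * L) * (stieltjes 1 a - stieltjes 1 b)
      + (stieltjes 2 a - stieltjes 2 b))"
proof -
  have a: "a > 0" and b: "b > 0" using p by (simp_all add: a_def b_def)
  let ?A = "M2 + 2 * euler_mascheroni * L + L ^ 2" and ?B = "2 * euler_mascheroni + 2 * L"
  let ?u = "\<lambda>m. 1 / (real m + a) - 1 / (real m + b)"
  let ?v = "\<lambda>m. ln (real m + a) ^ 1 / (real m + a) - ln (real m + b) ^ 1 / (real m + b)"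
  let ?w = "\<lambda>m. ln (real m + a) ^ 2 / (real m + a) - ln (real m + b) ^ 2 / (real m + b)"
  let ?f = "\<lambda>k. (-1) ^ k * Fc (1 + p * real k)"
  have trm: "?f (2 * m) + ?f (2 * m + 1) = (1 / (2 * p)) * (?A * ?u m + ?B * ?v m + ?w m)" for m
  proof -
    have e1: "1 + p * real (2 * m) = (2 * p) * (real m + a)" using p by (simp add: a_def field_simps)
    have e2: "1 + p * real (2 * m + 1) = (2 * p) * (real m + b)" using p by (simp add: b_def field_simps)
    have pa: "real m + a > 0" "real m + b > 0" using a b by (auto intro: add_nonneg_pos)
    have "?f (2 * m) + ?f (2 * m + 1) = Fc ((2 * p) * (real m + a)) - Fc ((2 * p) * (real m + b))"
      by (simp only: e1 e2) simp
    also have "\<dots> = (1 / (2 * p)) * (?A * ?u m + ?B * ?v m + ?w m)"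
    proof -
      have tp: "2 * p > 0" using p by simp
      show ?thesis unfolding Fc_scaled[OF tp pa(1)] Fc_scaled[OF tp pa(2)] L_def
        by (simp add: algebra_simps)
    qed
    finally show ?thesis .
  qed
  have lim1: "(\<lambda>N. \<Sum>k<2 * N. ?f k) \<longlonglongrightarrow> J2 p"
  proof -
    have "((\<lambda>N. \<Sum>k<N. ?f k) \<circ> (\<lambda>N. 2 * N)) \<longlonglongrightarrow> J2 p"
      by (rule LIMSEQ_subseq_LIMSEQ[OF J2_series[OF p]]) (auto simp: strict_mono_def)
    then show ?thesis by (simp add: o_def)
  qed
  have eqS: "(\<Sum>k<2 * N. ?f k) = (1 / (2 * p)) * (?A * (\<Sum>m<N. ?u m) + ?B * (\<Sum>m<N. ?v m) + (\<Sum>m<N. ?w m))" for N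
    unfolding sum_pairs trm by (rule sum_lin)
  have lim2: "(\<lambda>N. \<Sum>k<2 * N. ?f k) \<longlonglongrightarrow> (1 / (2 * p)) * (?A * (Digamma b - Digamma a)
      + ?B * (stieltjes 1 a - stieltjes 1 b) + (stieltjes 2 a - stieltjes 2 b))"
    unfolding eqS
    by (intro tendsto_mult tendsto_add tendsto_const digamma_diff stieltjes_diff a b) auto
  from LIMSEQ_unique[OF lim1 lim2] show ?thesis .
qed

lemma hurwitz_2_1: "hurwitz_zeta 2 1 = pi\<^sup>2 / 6"
proof -
  have "(\<lambda>k. (real k + 1) powr (- 2)) = (\<lambda>n. 1 / real ((n + 1)\<^sup>2))"
  proof
    fix n :: nat
    have "(real n + 1) powr (- 2) = 1 / ((real n + 1) powr 2)" by (rule powr_minus_divide)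
    also have "(real n + 1) powr 2 = (real n + 1) ^ 2" by simp
    finally show "(real n + 1) powr (- 2) = 1 / real ((n + 1)\<^sup>2)" by simp
  qed
  then show ?thesis unfolding hurwitz_zeta_def using inverse_squares_sums by (simp add: sums_iff)
qed

lemma J2_limit: "(J2 \<longlongrightarrow> euler_mascheroni\<^sup>2 + hurwitz_zeta 2 1) at_top"
proof (rule tendsto_at_topI_sequentially)
  fix X :: "nat \<Rightarrow> real" assume X: "filterlim X at_top sequentially"
  define Y where "Y n = max (X n) 1" for n
  have Ypos: "Y n \<ge> 1" for n by (simp add: Y_def)
  have Yt: "filterlim Y at_top sequentially"
    by (rule filterlim_at_top_mono[OF X]) (simp add: Y_def)
  have "(\<lambda>n. integral {0<..} (KK (Y n))) \<longlonglongrightarrow> integral {0<..} (\<lambda>t. ln t ^ 2 / exp t)"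
  proof (rule dominated_convergence(2)[OF _ int_ln2])
    fix n
    have "0 \<le> Y n" using Ypos[of n] by linarith
    from KK_absint[OF this] show "KK (Y n) integrable_on {0<..}"
      using set_lebesgue_integral_eq_integral(1) by blast
  next
    fix n and t :: real assume "t \<in> {0<..}"
    show "norm (KK (Y n) t) \<le> ln t ^ 2 / exp t" by (rule KK_bound)
  next
    fix t :: real assume t: "t \<in> {0<..}"
    have "filterlim (\<lambda>n. Y n * t) at_top sequentially"
      using t by (intro filterlim_at_top_mult_tendsto_pos[OF tendsto_const _ Yt]) auto
    then have "filterlim (\<lambda>n. - (Y n * t)) at_bot sequentially"
      by (simp add: filterlim_uminus_at_top)
    then have "(\<lambda>n. exp (- (Y n * t))) \<longlonglongrightarrow> 0"
      by (rule filterlim_compose[OF exp_at_bot])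
    then have "(\<lambda>n. ln t ^ 2 / exp t / (1 + exp (- (Y n * t)))) \<longlonglongrightarrow> ln t ^ 2 / exp t / (1 + 0)"
      by (intro tendsto_intros) auto
    then show "(\<lambda>n. KK (Y n) t) \<longlonglongrightarrow> ln t ^ 2 / exp t" by (simp add: KK_def)
  qed
  moreover have "integral {0<..} (\<lambda>t. ln t ^ 2 / exp t) = euler_mascheroni\<^sup>2 + hurwitz_zeta 2 1"
    using gamma_moments(3) hurwitz_2_1 by (simp add: integral_unique)
  moreover have "J2 (Y n) = integral {0<..} (KK (Y n))" for n
    using Ypos[of n] by (intro J2_eq) auto
  ultimately have "(\<lambda>n. J2 (Y n)) \<longlonglongrightarrow> euler_mascheroni\<^sup>2 + hurwitz_zeta 2 1" by simp
  moreover have "eventually (\<lambda>n. J2 (Y n) = J2 (X n)) sequentially"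
  proof -
    have "eventually (\<lambda>n. X n \<ge> 1) sequentially" using X by (simp add: filterlim_at_top)
    then show ?thesis by eventually_elim (simp add: Y_def)
  qed
  ultimately show "(\<lambda>n. J2 (X n)) \<longlonglongrightarrow> euler_mascheroni\<^sup>2 + hurwitz_zeta 2 1"
    by (rule Lim_transform_eventually)
qed


lemma alg_final:
  fixes p A D g L S1 S2 :: real
  assumes "p \<noteq> 0"
  shows "(1 / (2 * p)) * (A * D + (2 * g + 2 * L) * S1 + S2) = 1 / (2 * p) * A * D + (g + L) / p * S1 + 1 / (2 * p) * S2"
  using assms by (simp add: field_simps)

theorem mainTheorem17:
  shows "(\<forall>p::real. p > 0 \<longrightarrow>
      J2 p =
        1 / (2 * p) * (euler_mascheroni\<^sup>2 + pi\<^sup>2 / 6 + 2 * euler_mascheroni * ln (2 * p)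
                       + (ln (2 * p))\<^sup>2)
          * (Digamma ((p + 1) / (2 * p)) - Digamma (1 / (2 * p)))
      + (euler_mascheroni + ln (2 * p)) / p
          * (stieltjes 1 (1 / (2 * p)) - stieltjes 1 ((p + 1) / (2 * p)))
      + 1 / (2 * p) * (stieltjes 2 (1 / (2 * p)) - stieltjes 2 ((p + 1) / (2 * p))))
    \<and> (J2 \<longlongrightarrow> euler_mascheroni\<^sup>2 + hurwitz_zeta 2 1) at_top"
  proof (intro conjI allI impI)
  fix p :: real assume p: "p > 0"
  show "J2 p =
        1 / (2 * p) * (euler_mascheroni\<^sup>2 + pi\<^sup>2 / 6 + 2 * euler_mascheroni * ln (2 * p)
                       + (ln (2 * p))\<^sup>2)
          * (Digamma ((p + 1) / (2 * p)) - Digamma (1 / (2 * p)))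
      + (euler_mascheroni + ln (2 * p)) / p
          * (stieltjes 1 (1 / (2 * p)) - stieltjes 1 ((p + 1) / (2 * p)))
      + 1 / (2 * p) * (stieltjes 2 (1 / (2 * p)) - stieltjes 2 ((p + 1) / (2 * p)))"
    unfolding J2_formula[OF p] by (rule alg_final) (use p in simp)
next
  show "(J2 \<longlongrightarrow> euler_mascheroni\<^sup>2 + hurwitz_zeta 2 1) at_top" by (rule J2_limit)
qed

end
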